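(* Let $-\infty\le a<b\le+\infty$, $I=(a,b)$, and let $f$ be an increasing continuous set-function on $I$ which has the Radon-Nikodym property (with function $s$) and is dominated. Fix an open interval $J\subseteq I$. For every $n\in\mathbb N$ let $\{I_j^n\}_{j=1}^n$ be an optimal partition for $\min_{\{I_j\}\in \mathcal C_n(I)}\max_{1\le j\le n} f(I_j)$, let $k_n\ge1$ be the number of intervals of $\{I_j^n\}$ having nonempty intersection with $J$, and let $I_{j_1}^n,\dots,I_{j_{k_n}}^n$ be these intervals. Then \[ \liminf_{n\to\infty} k_n\max_{1\le i\le k_n} f(I_{j_i}^n)\ge\int_J s(x)\,dx. \] Moreover, when $J=I$ (so $k_n=n$), \[ \lim_{n\to\infty} n\max_{1\le j\le n} f(I_j^n)=\int_I s(x)\,dx. \]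
   Context: All intervals are open; $\mathcal L$ is Lebesgue measure. $\mathcal C_n(I)$ is the class of partitions $\{I_j\}_{j=1}^n$ of $I$ with $I_j=(x_{j-1},x_j)$, $x_0:=a$, $x_n:=b$, $x_{j-1}\le x_j$ (some $I_j$ may be empty). A set-function is a function on the open subintervals of $I$ with values in $[0,+\infty]$; continuous if $(x,y)\mapsto f((x,y))$ ($x\le y$ in $\overline I$) is continuous; increasing if $f(I_1)\le f(I_2)$ for intervals $I_1\subseteq I_2$. Radon-Nikodym property (increasing case): there is $s\in L^1(I)$, $s>0$ a.e., with $\lim_{J\downarrow x} f(J)/\mathcal L(J)=s(x)$ for a.e. $x\in I$, the limit taken along bounded open intervals containing $x$ shrinking to $x$. Dominated (increasing case): there is $d\in L^1(I)$ with $\sum_{j=1}^n \frac{f(I_j)}{\mathcal L(I_j)}\chi_{I_j}(x)\le d(x)$ for all $n$, all $\{I_j\}\in\mathcal C_n(I)$, and a.e. $x\in I$, the ratio taken to be $0$ when not well-defined. *)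

theory Defs
  imports "HOL-Analysis.Analysis"
begin

definition oi :: "ereal \<Rightarrow> ereal \<Rightarrow> real set" where
  "oi x y = {r. x < ereal r \<and> ereal r < y}"

text \<open>Set-functions are modelled as maps from sets of reals to [0,+\<infinity>];
  only their values on open subintervals of I = oi a b matter.\<close>

definition continuous_sf :: "ereal \<Rightarrow> ereal \<Rightarrow> (real set \<Rightarrow> ennreal) \<Rightarrow> bool" where
  "continuous_sf a b f \<longleftrightarrow>
     continuous_on {(x, y). a \<le> x \<and> x \<le> y \<and> y \<le> b} (\<lambda>(x, y). f (oi x y))"

definition increasing_sf :: "ereal \<Rightarrow> ereal \<Rightarrow> (real set \<Rightarrow> ennreal) \<Rightarrow> bool" where
  "increasing_sf a b f \<longleftrightarrow>
     (\<forall>x1 y1 x2 y2. a \<le> x1 \<and> x1 \<le> y1 \<and> y1 \<le> b \<and> a \<le> x2 \<and> x2 \<le> y2 \<and> y2 \<le> b \<and>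
        oi x1 y1 \<subseteq> oi x2 y2 \<longrightarrow> f (oi x1 y1) \<le> f (oi x2 y2))"

definition RN_sf :: "ereal \<Rightarrow> ereal \<Rightarrow> (real set \<Rightarrow> ennreal) \<Rightarrow> (real \<Rightarrow> real) \<Rightarrow> bool" where
  "RN_sf a b f s \<longleftrightarrow>
     set_integrable lborel (oi a b) s \<and>
     (AE x in lborel. x \<in> oi a b \<longrightarrow> s x > 0) \<and>
     (AE x in lborel. x \<in> oi a b \<longrightarrow>
        (\<forall>eps>0. \<exists>del>0. \<forall>u v. a < ereal u \<and> ereal v < b \<and> u < x \<and> x < v \<and> v - u < del \<longrightarrow>
            f (oi (ereal u) (ereal v)) \<noteq> top \<and>
            abs (enn2real (f (oi (ereal u) (ereal v))) / (v - u) - s x) < eps))"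

text \<open>Partitions in C_n(I): points x_0 = a \<le> x_1 \<le> ... \<le> x_n = b; the j-th interval
  (1 \<le> j \<le> n) is oi (x (j-1)) (x j).\<close>
definition partition_n :: "nat \<Rightarrow> ereal \<Rightarrow> ereal \<Rightarrow> (nat \<Rightarrow> ereal) \<Rightarrow> bool" where
  "partition_n n a b xs \<longleftrightarrow> xs 0 = a \<and> xs n = b \<and> (\<forall>j<n. xs j \<le> xs (Suc j))"

definition part_iv :: "(nat \<Rightarrow> ereal) \<Rightarrow> nat \<Rightarrow> real set" where
  "part_iv xs j = oi (xs (j - 1)) (xs j)"

text \<open>Ratio f(J)/L(J), taken to be 0 when not well-defined (L(J) = 0 or L(J) = \<infinity>).\<close>
definition sf_ratio :: "(real set \<Rightarrow> ennreal) \<Rightarrow> real set \<Rightarrow> ennreal" where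
  "sf_ratio f J = (if 0 < emeasure lborel J \<and> emeasure lborel J < top
                   then f J / emeasure lborel J else 0)"

definition dominated_sf :: "ereal \<Rightarrow> ereal \<Rightarrow> (real set \<Rightarrow> ennreal) \<Rightarrow> bool" where
  "dominated_sf a b f \<longleftrightarrow>
     (\<exists>d. set_integrable lborel (oi a b) d \<and>
        (\<forall>n xs. partition_n n a b xs \<longrightarrow>
           (AE x in lborel. x \<in> oi a b \<longrightarrow>
              (\<Sum>j\<in>{1..n}. sf_ratio f (part_iv xs j) * indicator (part_iv xs j) x) \<le> ennreal (d x))))"

definition max_sf :: "(real set \<Rightarrow> ennreal) \<Rightarrow> nat \<Rightarrow> (nat \<Rightarrow> ereal) \<Rightarrow> ennreal" where
  "max_sf f n xs = Max ((\<lambda>j. f (part_iv xs j)) ` {1..n})"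

definition optimal_partition :: "ereal \<Rightarrow> ereal \<Rightarrow> (real set \<Rightarrow> ennreal) \<Rightarrow> nat \<Rightarrow> (nat \<Rightarrow> ereal) \<Rightarrow> bool" where
  "optimal_partition a b f n xs \<longleftrightarrow> partition_n n a b xs \<and>
     (\<forall>ys. partition_n n a b ys \<longrightarrow> max_sf f n xs \<le> max_sf f n ys)"

definition meet_idx :: "nat \<Rightarrow> (nat \<Rightarrow> ereal) \<Rightarrow> real set \<Rightarrow> nat set" where
  "meet_idx n xs J = {j \<in> {1..n}. part_iv xs j \<inter> J \<noteq> {}}"

end

theory Submission
  imports Defs
begin


lemma oi_real[simp]: "oi (ereal u) (ereal v) = {u<..<v}"
  by (auto simp: oi_def)

lemma open_oi: "open (oi x y)"
proof -
  have "oi x y = {r. (\<lambda>_. x) r < ereal r} \<inter> {r. ereal r < (\<lambda>_. y) r}"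
    by (auto simp: oi_def)
  moreover have "open {r. (\<lambda>_. x) r < ereal r}" "open {r. ereal r < (\<lambda>_. y) r}"
    by (intro open_Collect_less continuous_intros continuous_on_ereal; simp)+
  ultimately show ?thesis by auto
qed

lemma oi_borel[measurable]: "oi x y \<in> sets borel"
  using open_oi by auto

lemma oi_lborel[measurable]: "oi x y \<in> sets lborel"
  using open_oi by auto

lemma oi_empty: "y \<le> x \<Longrightarrow> oi x y = {}"
  by (auto simp: oi_def)

lemma oi_mono: "x2 \<le> x1 \<Longrightarrow> y1 \<le> y2 \<Longrightarrow> oi x1 y1 \<subseteq> oi x2 y2"
  by (auto simp: oi_def)

lemma part_mono:
  assumes "partition_n n a b xs" "i \<le> j" "j \<le> n"
  shows "xs i \<le> xs j"
  using assms(2,3)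
proof (induction j)
  case 0 then show ?case by simp
next
  case (Suc j)
  show ?case
  proof (cases "i = Suc j")
    case False
    then have "xs i \<le> xs j" using Suc by simp
    also have "xs j \<le> xs (Suc j)" using assms(1) Suc.prems by (auto simp: partition_n_def)
    finally show ?thesis .
  qed simp
qed

lemma part_range:
  assumes "partition_n n a b xs" "j \<le> n"
  shows "a \<le> xs j" "xs j \<le> b"
  using part_mono[OF assms(1), of 0 j] part_mono[OF assms(1), of j n] assms
  by (auto simp: partition_n_def)

lemma part_sub: "partition_n n a b xs \<Longrightarrow> j \<in> {1..n} \<Longrightarrow> part_iv xs j \<subseteq> oi a b"
  unfolding part_iv_def using part_range[of n a b xs "j-1"] part_range[of n a b xs j]
  by (intro oi_mono) auto

lemma part_locate:
  assumes P: "partition_n n a b xs" and x: "x \<in> oi a b" and nx: "\<forall>j. xs j \<noteq> ereal x"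
  shows "\<exists>j\<in>{1..n}. x \<in> part_iv xs j \<and> (\<forall>j'\<in>{1..n}. j' \<noteq> j \<longrightarrow> x \<notin> part_iv xs j')"
proof -
  have ex: "\<exists>j. ereal x < xs j" using P x by (auto simp: partition_n_def oi_def)
  define j where "j = (LEAST j. ereal x < xs j)"
  have j1: "ereal x < xs j" unfolding j_def by (rule LeastI_ex[OF ex])
  have jn: "j \<le> n" unfolding j_def using P x by (intro Least_le) (auto simp: partition_n_def oi_def)
  have j0: "j \<noteq> 0"
  proof
    assume "j = 0"
    with j1 P x show False by (auto simp: partition_n_def oi_def)
  qed
  have "\<not> ereal x < xs (j - 1)" unfolding j_def using j0 j_def
    by (metis diff_less not_less_Least zero_less_iff_neq_zero zero_less_one)
  then have j2: "xs (j-1) < ereal x" using nx by (metis linorder_neqE)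
  have inj: "x \<in> part_iv xs j" using j1 j2 by (auto simp: part_iv_def oi_def)
  have "x \<notin> part_iv xs j'" if "j' \<in> {1..n}" "j' \<noteq> j" for j'
  proof
    assume xj: "x \<in> part_iv xs j'"
    show False
    proof (cases "j' < j")
      case True
      then have "xs j' \<le> xs (j-1)" using P jn by (intro part_mono) auto
      then show False using xj j2 by (auto simp: part_iv_def oi_def)
    next
      case False
      then have "xs j \<le> xs (j'-1)" using P that \<open>j' \<noteq> j\<close> by (intro part_mono) auto
      then show False using xj j1 by (auto simp: part_iv_def oi_def)
    qed
  qed
  then show ?thesis using inj j0 jn by auto
qed

lemma emeasure_oi_real: "u \<le> v \<Longrightarrow> emeasure lborel (oi (ereal u) (ereal v)) = ennreal (v - u)"
  by simp

lemma ratio_integral: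
  "(\<integral>\<^sup>+x. sf_ratio f J * indicator J x \<partial>lborel) \<le> f J" if "J \<in> sets lborel"
proof -
  have "(\<integral>\<^sup>+x. sf_ratio f J * indicator J x \<partial>lborel) = sf_ratio f J * emeasure lborel J"
    using that by (simp add: nn_integral_cmult_indicator)
  also have "\<dots> \<le> f J"
    unfolding sf_ratio_def by (auto simp: ennreal_divide_times)
  finally show ?thesis .
qed

lemma ratio_integral_eq:
  "(\<integral>\<^sup>+x. sf_ratio f J * indicator J x \<partial>lborel) = f J"
  if "J \<in> sets lborel" "0 < emeasure lborel J" "emeasure lborel J < top"
proof -
  have "(\<integral>\<^sup>+x. sf_ratio f J * indicator J x \<partial>lborel) = sf_ratio f J * emeasure lborel J"
    using that by (simp add: nn_integral_cmult_indicator)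
  also have "\<dots> = f J"
    unfolding sf_ratio_def using that by (auto simp: ennreal_divide_times)
  finally show ?thesis .
qed



definition good :: "ereal \<Rightarrow> ereal \<Rightarrow> (real set \<Rightarrow> ennreal) \<Rightarrow> (real \<Rightarrow> real) \<Rightarrow> real \<Rightarrow> bool" where
  "good a b f s x \<longleftrightarrow> s x > 0 \<and>
     (\<forall>eps>0. \<exists>del>0. \<forall>u v. a < ereal u \<and> ereal v < b \<and> u < x \<and> x < v \<and> v - u < del \<longrightarrow>
            f (oi (ereal u) (ereal v)) \<noteq> top \<and>
            abs (enn2real (f (oi (ereal u) (ereal v))) / (v - u) - s x) < eps)"

lemma near:
  assumes "a < ereal y" "ereal y < b"
  shows "\<exists>h0>0. a < ereal (y-h0) \<and> ereal (y+h0) < b"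
proof -
  obtain p where p: "a < ereal p" "ereal p < ereal y" using ereal_dense2[OF assms(1)] by auto
  obtain q where q: "ereal y < ereal q" "ereal q < b" using ereal_dense2[OF assms(2)] by auto
  define h where "h = min (y - p) (q - y)"
  have "h > 0" using p q by (auto simp: h_def)
  moreover have "a < ereal (y - h)"
    using p(1) by (rule less_le_trans) (auto simp: h_def)
  moreover have "ereal (y + h) < b"
    using q(2) by (rule le_less_trans[rotated]) (auto simp: h_def)
  ultimately show ?thesis by blast
qed

locale sfc =
  fixes a b :: ereal and f :: "real set \<Rightarrow> ennreal" and s :: "real \<Rightarrow> real"
  assumes ab: "a < b" and incr: "increasing_sf a b f" and RN: "RN_sf a b f s"
begin

lemma AE_good: "AE x in lborel. x \<in> oi a b \<longrightarrow> good a b f s x"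
  using RN unfolding RN_sf_def good_def by (auto elim!: eventually_elim2)

lemma incr_le:
  "a \<le> x2 \<Longrightarrow> x2 \<le> x1 \<Longrightarrow> x1 \<le> y1 \<Longrightarrow> y1 \<le> y2 \<Longrightarrow> y2 \<le> b \<Longrightarrow> f (oi x1 y1) \<le> f (oi x2 y2)"
  using incr unfolding increasing_sf_def
  by (metis oi_mono order_trans)

lemma incr_empty: "a \<le> x \<Longrightarrow> x \<le> y \<Longrightarrow> y \<le> b \<Longrightarrow> f {} \<le> f (oi x y)"
  using incr_le[of x x x y] oi_empty[of x x] by auto

lemma exists_good:
  assumes "u < v" "oi (ereal u) (ereal v) \<subseteq> oi a b"
  shows "\<exists>x\<in>{u<..<v}. good a b f s x"
proof (rule ccontr)
  assume "\<not> ?thesis"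
  then have "AE x in lborel. x \<notin> {u<..<v}"
    using AE_good assms(2) by (auto elim!: eventually_mono)
  then have "{u<..<v} \<in> null_sets lborel" by (subst AE_iff_null_sets) auto
  then have "emeasure lborel {u<..<v} = 0" by auto
  then show False using assms(1) by simp
qed

lemma good_interval:
  assumes "good a b f s y" "a < ereal y" "ereal y < b" "eps > 0"
  shows "\<exists>h0>0. \<forall>h. 0 < h \<and> h < h0 \<longrightarrow> f (oi (ereal (y-h)) (ereal (y+h))) \<noteq> top \<and>
           abs (enn2real (f (oi (ereal (y-h)) (ereal (y+h)))) / (2*h) - s y) < eps"
proof -
  obtain h1 where h1: "h1 > 0" "a < ereal (y-h1)" "ereal (y+h1) < b" using near assms(2,3) by blast
  obtain del where del: "del > 0" and D: "\<And>u v. a < ereal u \<and> ereal v < b \<and> u < y \<and> y < v \<and> v - u < del \<Longrightarrow>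
            f (oi (ereal u) (ereal v)) \<noteq> top \<and>
            abs (enn2real (f (oi (ereal u) (ereal v))) / (v - u) - s y) < eps"
    using assms(1,4) unfolding good_def by blast
  show ?thesis
  proof (intro exI[of _ "min h1 (del/2)"] conjI allI impI)
    show "min h1 (del/2) > 0" using h1 del by auto
    fix h assume h: "0 < h \<and> h < min h1 (del / 2)"
    have "ereal (y-h1) \<le> ereal (y-h)" "ereal (y+h) \<le> ereal (y+h1)" using h by auto
    then have "a < ereal (y - h)" "ereal (y + h) < b" using h1 by (meson less_le_trans le_less_trans)+
    then have "f (oi (ereal (y-h)) (ereal (y+h))) \<noteq> top \<and>
            abs (enn2real (f (oi (ereal (y-h)) (ereal (y+h)))) / ((y+h) - (y-h)) - s y) < eps"
      using h by (intro D) auto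
    then show "f (oi (ereal (y-h)) (ereal (y+h))) \<noteq> top"
      "abs (enn2real (f (oi (ereal (y-h)) (ereal (y+h)))) / (2*h) - s y) < eps" by auto
  qed
qed

lemma exists_good_I: "\<exists>y. a < ereal y \<and> ereal y < b \<and> good a b f s y"
proof -
  obtain u where u: "a < ereal u" "ereal u < b" using ereal_dense2[OF ab] by auto
  obtain v where v: "ereal u < ereal v" "ereal v < b" using ereal_dense2[OF u(2)] by auto
  have "oi (ereal u) (ereal v) \<subseteq> oi a b" using u v by (intro oi_mono) auto
  moreover have "u < v" using v by simp
  ultimately obtain y where "y \<in> {u<..<v}" "good a b f s y" using exists_good by blast
  moreover have "ereal u < ereal y" "ereal y < ereal v" using \<open>y \<in> {u<..<v}\<close> by auto
  ultimately show ?thesis using u v by (meson less_trans)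
qed

lemma f_empty: "f {} = 0"
proof -
  obtain y where y: "a < ereal y" "ereal y < b" "good a b f s y" using exists_good_I by auto
  obtain h0 where h0: "h0 > 0" and H: "\<And>h. 0 < h \<and> h < h0 \<Longrightarrow> f (oi (ereal (y-h)) (ereal (y+h))) \<noteq> top \<and>
           abs (enn2real (f (oi (ereal (y-h)) (ereal (y+h)))) / (2*h) - s y) < 1"
    using good_interval[OF y(3) y(1,2), of 1] by auto
  obtain h1 where h1: "h1 > 0" "a < ereal (y-h1)" "ereal (y+h1) < b" using near y(1,2) by blast
  have bnd: "f {} \<le> ennreal (2*h*(s y + 1))" if h: "0 < h" "h < min h0 h1" for h
  proof -
    have "ereal (y-h1) \<le> ereal (y-h)" "ereal (y+h) \<le> ereal (y+h1)" using h by auto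
    then have ab': "a \<le> ereal (y-h)" "ereal (y+h) \<le> b"
      using h1 by (meson order.strict_implies_order order.trans)+
    have "f {} \<le> f (oi (ereal (y-h)) (ereal (y+h)))"
      using h ab' by (intro incr_empty) auto
    moreover have F: "f (oi (ereal (y-h)) (ereal (y+h))) \<noteq> top"
      "abs (enn2real (f (oi (ereal (y-h)) (ereal (y+h)))) / (2*h) - s y) < 1" using H h by auto
    then have "enn2real (f (oi (ereal (y-h)) (ereal (y+h)))) / (2*h) < s y + 1" by auto
    then have "enn2real (f (oi (ereal (y-h)) (ereal (y+h)))) < 2*h*(s y + 1)"
      using h by (simp add: divide_less_eq mult.commute)
    then have "f (oi (ereal (y-h)) (ereal (y+h))) \<le> ennreal (2*h*(s y + 1))"
      using F(1) by (metis ennreal_enn2real_if ennreal_leI less_eq_real_def)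
    ultimately show ?thesis by (rule order_trans)
  qed
  have sy: "s y > 0" using y(3) by (auto simp: good_def)
  show ?thesis
  proof (rule ccontr)
    assume ne: "f {} \<noteq> 0"
    have "f {} \<le> ennreal (2*(min h0 h1 / 2)*(s y + 1))" using h0 h1 by (intro bnd) auto
    then have nt: "f {} \<noteq> top" using ennreal_less_top le_less_trans by (metis less_irrefl)
    define c where "c = enn2real (f {})"
    have c: "c > 0" using ne nt by (simp add: c_def enn2real_positive_iff less_top zero_less_iff_neq_zero)
    define h where "h = min (min h0 h1 / 2) (c / (4 * (s y + 1)))"
    have hpos: "0 < h" "h < min h0 h1" using h0 h1 c sy by (auto simp: h_def)
    have "c \<le> enn2real (ennreal (2*h*(s y + 1)))" using bnd[OF hpos] unfolding c_def
      by (intro enn2real_mono) auto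
    also have "\<dots> = 2*h*(s y + 1)" using hpos sy by (intro enn2real_ennreal) auto
    finally have "c \<le> 2*h*(s y + 1)" .
    also have "\<dots> \<le> 2 * (c / (4 * (s y + 1))) * (s y + 1)"
      using sy by (intro mult_right_mono mult_left_mono) (auto simp: h_def)
    also have "\<dots> = c/2" using sy by (simp add: field_simps)
    finally show False using c by simp
  qed
qed

lemma f_pos:
  assumes "u < v" "a \<le> ereal u" "ereal v \<le> b"
  shows "f (oi (ereal u) (ereal v)) > 0"
proof -
  have "oi (ereal u) (ereal v) \<subseteq> oi a b" using assms by (intro oi_mono) auto
  then obtain y where y: "y \<in> {u<..<v}" "good a b f s y" using exists_good assms(1) by blast
  have "ereal u < ereal y" "ereal y < ereal v" using y by auto
  then have ay: "a < ereal y" "ereal y < b" using assms by (meson less_le_trans le_less_trans)+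
  have sy: "s y > 0" using y(2) by (auto simp: good_def)
  obtain h0 where h0: "h0 > 0" and H: "\<And>h. 0 < h \<and> h < h0 \<Longrightarrow> f (oi (ereal (y-h)) (ereal (y+h))) \<noteq> top \<and>
           abs (enn2real (f (oi (ereal (y-h)) (ereal (y+h)))) / (2*h) - s y) < s y / 2"
    using good_interval[OF y(2) ay, of "s y / 2"] sy by auto
  define h where "h = min (h0/2) (min (y-u) (v-y))"
  have h: "0 < h" "h < h0" "u \<le> y - h" "y + h \<le> v" using h0 y by (auto simp: h_def)
  have "abs (enn2real (f (oi (ereal (y-h)) (ereal (y+h)))) / (2*h) - s y) < s y / 2" using H h by auto
  then have "enn2real (f (oi (ereal (y-h)) (ereal (y+h)))) / (2*h) > 0" using sy by linarith
  then have "enn2real (f (oi (ereal (y-h)) (ereal (y+h)))) > 0" using h by (simp add: zero_less_divide_iff)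
  then have "f (oi (ereal (y-h)) (ereal (y+h))) > 0" using enn2real_positive_iff by blast
  also have "f (oi (ereal (y-h)) (ereal (y+h))) \<le> f (oi (ereal u) (ereal v))"
    using h assms by (intro incr_le) auto
  finally show ?thesis .
qed

end


definition Gsum :: "(real set \<Rightarrow> ennreal) \<Rightarrow> nat \<Rightarrow> (nat \<Rightarrow> ereal) \<Rightarrow> real \<Rightarrow> ennreal" where
  "Gsum f n xs x = (\<Sum>j\<in>{1..n}. sf_ratio f (part_iv xs j) * indicator (part_iv xs j) x)"

lemma Gsum_borel[measurable]: "Gsum f n xs \<in> borel_measurable borel"
  unfolding Gsum_def part_iv_def by measurable

lemma Gsum_lborel[measurable]: "Gsum f n xs \<in> borel_measurable lborel"
  unfolding Gsum_def part_iv_def by measurable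

lemma Gsum_single:
  assumes "j \<in> {1..n}" "x \<in> part_iv xs j" "\<forall>j'\<in>{1..n}. j' \<noteq> j \<longrightarrow> x \<notin> part_iv xs j'"
  shows "Gsum f n xs x = sf_ratio f (part_iv xs j)"
proof -
  have "Gsum f n xs x = sf_ratio f (part_iv xs j) * indicator (part_iv xs j) x +
     (\<Sum>j'\<in>{1..n} - {j}. sf_ratio f (part_iv xs j') * indicator (part_iv xs j') x)"
    unfolding Gsum_def using assms(1) by (subst sum.remove) auto
  also have "(\<Sum>j'\<in>{1..n} - {j}. sf_ratio f (part_iv xs j') * indicator (part_iv xs j') x) = 0"
    using assms(3) by (intro sum.neutral) auto
  finally show ?thesis using assms(2) by simp
qed

lemma AE_not_partpt: "AE x in lborel. \<forall>k j. (xs :: nat \<Rightarrow> nat \<Rightarrow> ereal) k j \<noteq> ereal x"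
proof -
  have "{r. \<exists>k j. xs k j = ereal r} \<subseteq> (\<lambda>(k,j). real_of_ereal (xs k j)) ` UNIV"
    by (auto simp: image_iff) (metis real_of_ereal.simps(1))
  then have "countable {r. \<exists>k j. xs k j = ereal r}"
    by (rule countable_subset) auto
  then have "{r. \<exists>k j. xs k j = ereal r} \<in> null_sets lborel" by (rule countable_imp_null_set_lborel)
  then have "AE x in lborel. x \<notin> {r. \<exists>k j. xs k j = ereal r}" by (rule AE_not_in)
  then show ?thesis by auto
qed

context sfc begin

lemma mesh:
  assumes part: "\<And>k. partition_n (n k) a b (xs k)"
    and small: "\<And>k j. j \<in> {1..n k} \<Longrightarrow> f (part_iv (xs k) j) \<le> m k"
    and m: "m \<longlonglongrightarrow> 0"
  shows "AE x in lborel. x \<in> oi a b \<longrightarrow> (\<lambda>k. Gsum f (n k) (xs k) x) \<longlonglongrightarrow> ennreal (s x)"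
  using AE_good AE_not_partpt[of xs]
proof eventually_elim
  case (elim x)
  show ?case
  proof
    assume xI: "x \<in> oi a b"
    then have gx: "good a b f s x" using elim by auto
    have ax: "a < ereal x" "ereal x < b" using xI by (auto simp: oi_def)
    have claim: "\<forall>\<^sub>F k in sequentially. Gsum f (n k) (xs k) x \<noteq> top \<and>
        abs (enn2real (Gsum f (n k) (xs k) x) - s x) < eps" if eps: "eps > 0" for eps
    proof -
      obtain del where del: "del > 0" and D: "\<And>u v. a < ereal u \<and> ereal v < b \<and> u < x \<and> x < v \<and> v - u < del \<Longrightarrow>
            f (oi (ereal u) (ereal v)) \<noteq> top \<and>
            abs (enn2real (f (oi (ereal u) (ereal v))) / (v - u) - s x) < eps"
        using gx eps unfolding good_def by blast
      obtain w0 where w0: "a < ereal w0" "w0 < x" using ereal_dense2[OF ax(1)] by auto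
      obtain w1 where w1: "ereal w1 < b" "x < w1" using ereal_dense2[OF ax(2)] by auto
      define w where "w = max w0 (x - del/3)"
      define w' where "w' = min w1 (x + del/3)"
      have w: "a < ereal w" "w < x" "x - del/3 \<le> w"
        using w0 del by (auto simp: w_def intro: less_le_trans)
      have "ereal w' \<le> ereal w1" by (simp add: w'_def)
      then have "ereal w' < b" using w1(1) by (rule le_less_trans)
      then have w': "ereal w' < b" "x < w'" "w' \<le> x + del/3"
        using w1 del by (auto simp: w'_def)
      define c where "c = min (f (oi (ereal w) (ereal x))) (f (oi (ereal x) (ereal w')))"
      have "f (oi (ereal w) (ereal x)) > 0" using w ax by (intro f_pos) auto
      moreover have "f (oi (ereal x) (ereal w')) > 0" using w' ax by (intro f_pos) auto
      ultimately have c: "c > 0" by (simp add: c_def)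
      have ev: "\<forall>\<^sub>F k in sequentially. m k < c" using order_tendstoD(2)[OF m c] .
      show ?thesis using ev
      proof eventually_elim
        case (elim k)
        obtain j where j: "j \<in> {1..n k}" "x \<in> part_iv (xs k) j"
          "\<forall>j'\<in>{1..n k}. j' \<noteq> j \<longrightarrow> x \<notin> part_iv (xs k) j'"
          using part_locate[OF part xI] \<open>\<forall>k j. xs k j \<noteq> ereal x\<close> by blast
        define U where "U = xs k (j-1)"
        define V where "V = xs k j"
        have UV: "U < ereal x" "ereal x < V" using j(2) by (auto simp: part_iv_def oi_def U_def V_def)
        have Ua: "a \<le> U" "U \<le> b" "a \<le> V" "V \<le> b" using part_range[OF part, of "j-1" k] part_range[OF part, of j k] j(1)
          by (auto simp: U_def V_def)
        have fk: "f (oi U V) < c" using small[OF j(1)] elim by (auto simp: part_iv_def U_def V_def)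
        have Uw: "ereal w < U"
        proof (rule ccontr)
          assume "\<not> ereal w < U"
          then have "f (oi (ereal w) (ereal x)) \<le> f (oi U V)"
            using Ua UV w by (intro incr_le) auto
          then show False using fk by (auto simp: c_def)
        qed
        have Vw: "V < ereal w'"
        proof (rule ccontr)
          assume "\<not> V < ereal w'"
          then have "f (oi (ereal x) (ereal w')) \<le> f (oi U V)"
            using Ua UV w' by (intro incr_le) auto
          then show False using fk by (auto simp: c_def)
        qed
        obtain u where u: "U = ereal u" using Uw UV by (cases U) auto
        obtain v where v: "V = ereal v" using Vw UV by (cases V) auto
        have uv: "w < u" "u < x" "x < v" "v < w'" using Uw UV Vw u v by auto
        have "a < ereal u" using w(1) uv(1) by (meson ereal_less_eq(3) less_eq_real_def less_le_trans)
        moreover have "ereal v < b" using w'(1) uv(4) by (meson ereal_less_eq(3) less_eq_real_def le_less_trans)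
        moreover have "v - u < del" using uv w w' del by linarith
        ultimately have F: "f (oi (ereal u) (ereal v)) \<noteq> top"
           "abs (enn2real (f (oi (ereal u) (ereal v))) / (v - u) - s x) < eps"
          using D uv by blast+
        have G: "Gsum f (n k) (xs k) x = f (oi (ereal u) (ereal v)) / ennreal (v - u)"
        proof -
          have PI: "part_iv (xs k) j = {u<..<v}"
            unfolding part_iv_def U_def[symmetric] V_def[symmetric] u v by simp
          show ?thesis using Gsum_single[OF j] uv PI by (simp add: sf_ratio_def)
        qed
        also have "\<dots> = ennreal (enn2real (f (oi (ereal u) (ereal v))) / (v - u))"
          using F(1) uv by (subst divide_ennreal[symmetric]) (auto simp: ennreal_enn2real_if)
        finally show ?case using F uv by simp
      qed
    qed
    define r where "r k = enn2real (Gsum f (n k) (xs k) x)" for k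
    have "r \<longlonglongrightarrow> s x"
    proof (rule tendstoI)
      fix e :: real assume "e > 0"
      from claim[OF this] show "\<forall>\<^sub>F k in sequentially. dist (r k) (s x) < e"
        by eventually_elim (simp add: r_def dist_real_def)
    qed
    then have "(\<lambda>k. ennreal (r k)) \<longlonglongrightarrow> ennreal (s x)" by (rule tendsto_ennrealI)
    moreover have "\<forall>\<^sub>F k in sequentially. ennreal (r k) = Gsum f (n k) (xs k) x"
      using claim[OF zero_less_one] by eventually_elim (simp add: r_def ennreal_enn2real_if)
    ultimately show "(\<lambda>k. Gsum f (n k) (xs k) x) \<longlonglongrightarrow> ennreal (s x)"
      by (rule Lim_transform_eventually)
  qed
qed

end


locale sfcc = sfc +
  assumes cont: "continuous_sf a b f"
begin

lemma cont_y: assumes "a \<le> x" shows "continuous_on {x..b} (\<lambda>y. f (oi x y))"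
proof -
  have "continuous_on {x..b} (\<lambda>y. (x,y))" by (intro continuous_intros)
  moreover have "(\<lambda>y. (x,y)) ` {x..b} \<subseteq> {(x, y). a \<le> x \<and> x \<le> y \<and> y \<le> b}" using assms by auto
  ultimately show ?thesis
    using continuous_on_compose2[OF cont[unfolded continuous_sf_def], of "{x..b}" "\<lambda>y. (x, y)"]
    by auto
qed

lemma cont_nbhd:
  assumes "a \<le> x" "p \<in> {x..b}" "open B" "f (oi x p) \<in> B"
  shows "\<exists>U. open U \<and> p \<in> U \<and> (\<forall>z\<in>U \<inter> {x..b}. f (oi x z) \<in> B)"
proof -
  obtain A where "open A" "A \<inter> {x..b} = (\<lambda>y. f (oi x y)) -` B \<inter> {x..b}"
    using cont_y[OF assms(1)] assms(3) unfolding continuous_on_open_invariant by blast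
  then show ?thesis using assms(2,4) by (intro exI[of _ A]) auto
qed

definition step :: "real \<Rightarrow> ereal \<Rightarrow> ereal" where
  "step t x = Sup {y. x \<le> y \<and> y \<le> b \<and> f (oi x y) \<le> ennreal t}"

lemma step_ge: "x \<le> b \<Longrightarrow> x \<le> step t x"
  unfolding step_def using f_empty by (intro Sup_upper) (auto simp: oi_empty)

lemma step_le: "step t x \<le> b"
  unfolding step_def by (intro Sup_least) auto

lemma extend:
  assumes "a \<le> x" "x \<le> p" "p < b" "f (oi x p) < ennreal t"
  shows "\<exists>y. p < y \<and> y \<le> b \<and> f (oi x y) < ennreal t"
proof -
  obtain U where U: "open U" "p \<in> U" "\<forall>z\<in>U \<inter> {x..b}. f (oi x z) \<in> {..<ennreal t}"
  proof -
    have "p \<in> {x..b}" using assms by auto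
    then show ?thesis using cont_nbhd[OF assms(1), of p "{..<ennreal t}"] assms(4) that by auto
  qed
  obtain b' where b': "b' > p" "{p..<b'} \<subseteq> U" using open_right[OF U(1,2) assms(3)] by auto
  obtain y where y: "p < y" "y < min b' b" using dense[of p "min b' b"] b' assms(3) by auto
  have "y \<in> U \<inter> {x..b}" using y b' assms by auto
  then show ?thesis using U(3) y by auto
qed

lemma step_f_le:
  assumes "a \<le> x" "x \<le> b" "t > 0"
  shows "f (oi x (step t x)) \<le> ennreal t"
proof (rule ccontr)
  define p where "p = step t x"
  assume "\<not> ?thesis"
  then have gt: "f (oi x p) > ennreal t" by (simp add: p_def)
  have xp: "x \<le> p" "p \<le> b" using step_ge[OF assms(2)] step_le by (auto simp: p_def)
  have "x \<noteq> p" using gt f_empty by (auto simp: oi_empty)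
  then have xp': "x < p" using xp by auto
  obtain U where U: "open U" "p \<in> U" "\<forall>z\<in>U \<inter> {x..b}. f (oi x z) \<in> {ennreal t<..}"
    using cont_nbhd[OF assms(1), of p "{ennreal t<..}"] assms xp gt by auto
  obtain b' where b': "b' < p" "{b'<..p} \<subseteq> U" using open_left[OF U(1,2) xp'] by auto
  obtain y where y: "y \<in> {y. x \<le> y \<and> y \<le> b \<and> f (oi x y) \<le> ennreal t}" "max b' x < y"
    using less_Sup_iff[of "max b' x" "{y. x \<le> y \<and> y \<le> b \<and> f (oi x y) \<le> ennreal t}"] b' xp'
    unfolding p_def step_def by auto
  have "y \<le> p" unfolding p_def step_def using y(1) by (rule Sup_upper)
  then have "y \<in> U \<inter> {x..b}" using y b' by auto
  then have "ennreal t < f (oi x y)" using U(3) by blast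
  moreover from y(1) have "f (oi x y) \<le> ennreal t" by simp
  ultimately show False by simp
qed

lemma step_f_eq:
  assumes "a \<le> x" "x \<le> b" "t > 0" "step t x < b"
  shows "f (oi x (step t x)) = ennreal t"
proof (rule ccontr)
  assume "\<not> ?thesis"
  then have "f (oi x (step t x)) < ennreal t" using step_f_le[OF assms(1-3)] by auto
  then obtain y where y: "step t x < y" "y \<le> b" "f (oi x y) < ennreal t"
    using extend[OF assms(1) step_ge[OF assms(2)] assms(4)] by auto
  have "x \<le> y" using step_ge[OF assms(2), of t] y(1) by auto
  then have "y \<le> step t x" unfolding step_def using y by (intro Sup_upper) auto
  then show False using y(1) by auto
qed

lemma step_gt:
  assumes "a \<le> x" "x < b" "t > 0"
  shows "x < step t x"
proof -
  have "f (oi x x) < ennreal t" using f_empty assms by (simp add: oi_empty)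
  then obtain y where y: "x < y" "y \<le> b" "f (oi x y) < ennreal t"
    using extend[OF assms(1) order.refl assms(2)] by auto
  have "y \<le> step t x" unfolding step_def using y by (intro Sup_upper) auto
  then show ?thesis using y(1) by auto
qed

definition gp :: "real \<Rightarrow> nat \<Rightarrow> ereal" where
  "gp t j = (step t ^^ j) a"

lemma gp_0[simp]: "gp t 0 = a" and gp_Suc: "gp t (Suc j) = step t (gp t j)"
  by (simp_all add: gp_def)

lemma gp_range: "a \<le> gp t j \<and> gp t j \<le> b"
proof (induction j)
  case 0 then show ?case using ab by simp
next
  case (Suc j) then show ?case using step_ge[of "gp t j" t] step_le[of t "gp t j"] by (auto simp: gp_Suc)
qed

lemma gp_mono_Suc: "gp t j \<le> gp t (Suc j)"
  using step_ge[of "gp t j" t] gp_range by (auto simp: gp_Suc)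

lemma gp_mono: "i \<le> j \<Longrightarrow> gp t i \<le> gp t j"
  using lift_Suc_mono_le[of "gp t", OF gp_mono_Suc] by blast

end


lemma set_int_fin:
  assumes "set_integrable lborel A (g :: real \<Rightarrow> real)"
  shows "(\<integral>\<^sup>+x. ennreal (g x) * indicator A x \<partial>lborel) < \<infinity>"
proof -
  have "(\<integral>\<^sup>+x. ennreal (norm (indicator A x *\<^sub>R g x)) \<partial>lborel) < \<infinity>"
    using assms unfolding set_integrable_def integrable_iff_bounded by auto
  moreover have "(\<integral>\<^sup>+x. ennreal (g x) * indicator A x \<partial>lborel) \<le>
      (\<integral>\<^sup>+x. ennreal (norm (indicator A x *\<^sub>R g x)) \<partial>lborel)"
    by (intro nn_integral_mono) (auto simp: indicator_def intro: ennreal_leI)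
  ultimately show ?thesis by (rule le_less_trans[rotated])
qed

locale sfd = sfcc +
  fixes d :: "real \<Rightarrow> real"
  assumes d_int: "set_integrable lborel (oi a b) d"
    and d_bnd: "\<And>n xs. partition_n n a b xs \<Longrightarrow>
        AE x in lborel. x \<in> oi a b \<longrightarrow> Gsum f n xs x \<le> ennreal (d x)"
begin

definition "Dtot = (\<integral>\<^sup>+x. ennreal (d x) * indicator (oi a b) x \<partial>lborel)"

lemma Dtot_fin: "Dtot < \<infinity>"
  unfolding Dtot_def by (rule set_int_fin[OF d_int])

lemma Gsum_out: "partition_n n a b xs \<Longrightarrow> x \<notin> oi a b \<Longrightarrow> Gsum f n xs x = 0"
  unfolding Gsum_def using part_sub[of n a b xs] by (intro sum.neutral) (fastforce simp: indicator_def)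

lemma intG_le:
  assumes "partition_n n a b ys"
  shows "(\<integral>\<^sup>+x. Gsum f n ys x \<partial>lborel) \<le> Dtot"
  unfolding Dtot_def
proof (rule nn_integral_mono_AE)
  show "AE x in lborel. Gsum f n ys x \<le> ennreal (d x) * indicator (oi a b) x"
    using d_bnd[OF assms] by eventually_elim (case_tac "x \<in> oi a b"; auto simp: Gsum_out[OF assms])
qed

lemma intG_sum:
  "(\<integral>\<^sup>+x. Gsum f n ys x \<partial>lborel) =
     (\<Sum>j\<in>{1..n}. \<integral>\<^sup>+x. sf_ratio f (part_iv ys j) * indicator (part_iv ys j) x \<partial>lborel)"
  unfolding Gsum_def by (intro nn_integral_sum) (auto simp: part_iv_def)

lemma intG_ge:
  assumes T: "T \<subseteq> {1..n}"
    and TT: "\<And>j. j \<in> T \<Longrightarrow> \<exists>u v. u < v \<and> part_iv ys j = {u<..<v} \<and> f (part_iv ys j) = ennreal t"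
  shows "of_nat (card T) * ennreal t \<le> (\<integral>\<^sup>+x. Gsum f n ys x \<partial>lborel)"
proof -
  have "of_nat (card T) * ennreal t = (\<Sum>j\<in>T. ennreal t)" by simp
  also have "\<dots> = (\<Sum>j\<in>T. \<integral>\<^sup>+x. sf_ratio f (part_iv ys j) * indicator (part_iv ys j) x \<partial>lborel)"
  proof (intro sum.cong refl)
    fix j assume "j \<in> T"
    then obtain u v where uv: "u < v" "part_iv ys j = {u<..<v}" "f (part_iv ys j) = ennreal t"
      using TT by blast
    show "ennreal t = (\<integral>\<^sup>+x. sf_ratio f (part_iv ys j) * indicator (part_iv ys j) x \<partial>lborel)"
      using uv by (subst ratio_integral_eq) auto
  qed
  also have "\<dots> \<le> (\<Sum>j\<in>{1..n}. \<integral>\<^sup>+x. sf_ratio f (part_iv ys j) * indicator (part_iv ys j) x \<partial>lborel)"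
    using T by (intro sum_mono2) auto
  also have "\<dots> = (\<integral>\<^sup>+x. Gsum f n ys x \<partial>lborel)" by (rule intG_sum[symmetric])
  finally show ?thesis .
qed

lemma count:
  assumes t: "t > 0" and M: "gp t M < b" and ys: "M \<le> n" "\<And>i. i \<le> M \<Longrightarrow> ys i = gp t i"
  shows "of_nat (M - 1) * ennreal t \<le> (\<integral>\<^sup>+x. Gsum f n ys x \<partial>lborel)"
proof -
  have "of_nat (card {2..M}) * ennreal t \<le> (\<integral>\<^sup>+x. Gsum f n ys x \<partial>lborel)"
  proof (rule intG_ge)
    show "{2..M} \<subseteq> {1..n}" using ys by auto
    fix j assume j: "j \<in> {2..M}"
    have P: "part_iv ys j = oi (gp t (j-1)) (gp t j)" using j ys by (auto simp: part_iv_def)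
    have g1: "a < gp t 1" using step_gt[of a t] ab t by (simp add: gp_Suc[of t 0, simplified])
    have "gp t 1 \<le> gp t (j-1)" using j by (intro gp_mono) auto
    then have lo: "a < gp t (j-1)" using g1 by auto
    have "gp t j \<le> gp t M" using j by (intro gp_mono) auto
    then have hi: "gp t j < b" using M by auto
    have "gp t (j-1) \<le> gp t j" by (intro gp_mono) auto
    then have mid: "gp t (j-1) < b" using hi by auto
    have sj: "gp t j = step t (gp t (j-1))" using j gp_Suc[of t "j-1"] by auto
    have lt: "gp t (j-1) < gp t j" using step_gt[OF _ mid t] gp_range sj by auto
    have feq: "f (oi (gp t (j-1)) (gp t j)) = ennreal t"
      using step_f_eq[of "gp t (j-1)" t] gp_range t hi sj by auto
    obtain u where u: "gp t (j-1) = ereal u" using lo mid by (cases "gp t (j-1)") auto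
    obtain v where v: "gp t j = ereal v" using lt hi by (cases "gp t j") auto
    show "\<exists>u v. u < v \<and> part_iv ys j = {u<..<v} \<and> f (part_iv ys j) = ennreal t"
      using P feq lt u v by (intro exI[of _ u] exI[of _ v]) auto
  qed
  then show ?thesis by simp
qed

lemma gp_reaches: assumes t: "t > 0" shows "\<exists>N. gp t N = b"
proof (rule ccontr)
  assume "\<not> ?thesis"
  then have lt: "gp t M < b" for M using gp_range[of t M] by (auto simp: order.order_iff_strict)
  define D where "D = enn2real Dtot"
  have DD: "Dtot = ennreal D" using Dtot_fin by (simp add: D_def ennreal_enn2real_if)
  define M where "M = nat \<lceil>D / t\<rceil> + 2"
  define ys where "ys i = (if i \<le> M then gp t i else b)" for i
  have ys_part: "partition_n (Suc M) a b ys"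
    unfolding partition_n_def ys_def using gp_range gp_mono_Suc by auto
  have "of_nat (M - 1) * ennreal t \<le> (\<integral>\<^sup>+x. Gsum f (Suc M) ys x \<partial>lborel)"
    using count[OF t lt[of M], of "Suc M" ys] by (auto simp: ys_def)
  also have "\<dots> \<le> ennreal D" using intG_le[OF ys_part] DD by simp
  finally have le: "ennreal (real (M - 1) * t) \<le> ennreal D" using t by (simp add: ennreal_mult ennreal_of_nat_eq_real_of_nat)
  have "D \<ge> 0" by (simp add: D_def)
  then have "real (M - 1) * t \<le> D" using le by (simp add: ennreal_le_iff)
  moreover have "real (M - 1) > D / t" unfolding M_def by (simp; linarith)
  then have "real (M - 1) * t > D" using t by (simp add: field_simps)
  ultimately show False by simp
qed

definition "Nt t = (LEAST N. gp t N = b)"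

lemma Nt: assumes "t > 0" shows "gp t (Nt t) = b" "Nt t \<ge> 1" "\<And>i. i < Nt t \<Longrightarrow> gp t i < b"
proof -
  show N: "gp t (Nt t) = b" unfolding Nt_def using gp_reaches[OF assms] by (rule LeastI_ex)
  show "Nt t \<ge> 1" using N ab by (cases "Nt t") auto
  fix i assume "i < Nt t"
  then have "gp t i \<noteq> b" unfolding Nt_def by (rule not_less_Least)
  then show "gp t i < b" using gp_range[of t i] by auto
qed

definition "gpart t j = gp t (min j (Nt t))"

lemma gpart_part: assumes "t > 0" "Nt t \<le> n" shows "partition_n n a b (gpart t)"
  unfolding partition_n_def gpart_def using Nt[OF assms(1)] assms(2) gp_range[of t]
  by (auto simp: min_def gp_mono_Suc)

lemma gpart_small: assumes t: "t > 0" and j: "j \<ge> 1" shows "f (part_iv (gpart t) j) \<le> ennreal t"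
proof (cases "j \<le> Nt t")
  case True
  then have "part_iv (gpart t) j = oi (gp t (j-1)) (step t (gp t (j-1)))"
    using j gp_Suc[of t "j-1"] by (auto simp: part_iv_def gpart_def)
  then show ?thesis using step_f_le[of "gp t (j-1)" t] gp_range t by auto
next
  case False
  then have "part_iv (gpart t) j = {}" by (auto simp: part_iv_def gpart_def oi_empty)
  then show ?thesis using f_empty by simp
qed

lemma gpart_count:
  assumes t: "t > 0"
  shows "of_nat (Nt t) * ennreal t \<le> 2 * ennreal t + (\<integral>\<^sup>+x. Gsum f (Nt t) (gpart t) x \<partial>lborel)"
proof -
  define M where "M = Nt t - 1"
  have NM: "Nt t = Suc M" using Nt(2)[OF t] by (simp add: M_def)
  have "of_nat (M - 1) * ennreal t \<le> (\<integral>\<^sup>+x. Gsum f (Nt t) (gpart t) x \<partial>lborel)"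
    using Nt(3)[OF t, of M] NM by (intro count[OF t]) (auto simp: gpart_def)
  moreover have "of_nat (Nt t) * ennreal t \<le> 2 * ennreal t + of_nat (M - 1) * ennreal t"
  proof -
    have "Nt t \<le> 2 + (M - 1)" using NM by simp
    then have "of_nat (Nt t) \<le> (of_nat (2 + (M - 1)) :: ennreal)" by (rule of_nat_mono)
    then have "of_nat (Nt t) \<le> (2 + of_nat (M - 1) :: ennreal)" by (metis of_nat_add of_nat_numeral)
    then have "of_nat (Nt t) * ennreal t \<le> (2 + of_nat (M - 1)) * ennreal t" by (rule mult_right_mono) simp
    then show ?thesis by (simp add: distrib_right)
  qed
  ultimately show ?thesis by (meson add_left_mono order.trans)
qed

end


context sfd begin

definition "Sint = (\<integral>\<^sup>+x. ennreal (indicator (oi a b) x *\<^sub>R s x) \<partial>lborel)"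

lemma s_int: "integrable lborel (\<lambda>x. indicator (oi a b) x *\<^sub>R s x)"
  using RN unfolding RN_sf_def set_integrable_def by auto

lemma d_int': "integrable lborel (\<lambda>x. indicator (oi a b) x *\<^sub>R d x)"
  using d_int unfolding set_integrable_def by auto

lemma Sint_fin: "Sint < \<infinity>"
proof -
  have "Sint \<le> (\<integral>\<^sup>+x. ennreal (norm (indicator (oi a b) x *\<^sub>R s x)) \<partial>lborel)"
    unfolding Sint_def by (intro nn_integral_mono ennreal_leI) auto
  also have "\<dots> < \<infinity>" using s_int unfolding integrable_iff_bounded by auto
  finally show ?thesis .
qed

lemma seq_conv:
  assumes tk: "\<And>k. tk k > 0" "tk \<longlonglongrightarrow> 0"
  shows "(\<lambda>k. \<integral>\<^sup>+x. Gsum f (Nt (tk k)) (gpart (tk k)) x \<partial>lborel) \<longlonglongrightarrow> Sint"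
  unfolding Sint_def
proof (rule nn_integral_dominated_convergence[where w = "\<lambda>x. ennreal (indicator (oi a b) x *\<^sub>R d x)"])
  show "(\<lambda>x. ennreal (indicator (oi a b) x *\<^sub>R s x)) \<in> borel_measurable lborel"
    using s_int by (intro measurable_compose[OF _ measurable_ennreal]) auto
  show "(\<lambda>x. ennreal (indicator (oi a b) x *\<^sub>R d x)) \<in> borel_measurable lborel"
    using d_int' by (intro measurable_compose[OF _ measurable_ennreal]) auto
  show "Gsum f (Nt (tk k)) (gpart (tk k)) \<in> borel_measurable lborel" for k by measurable
  have P: "partition_n (Nt (tk k)) a b (gpart (tk k))" for k using tk by (intro gpart_part) auto
  show "AE x in lborel. Gsum f (Nt (tk k)) (gpart (tk k)) x \<le> ennreal (indicator (oi a b) x *\<^sub>R d x)" for k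
    using d_bnd[OF P[of k]] by eventually_elim (case_tac "x \<in> oi a b"; auto simp: Gsum_out[OF P])
  show "(\<integral>\<^sup>+ x. ennreal (indicator (oi a b) x *\<^sub>R d x) \<partial>lborel) < \<infinity>"
  proof -
    have "(\<integral>\<^sup>+ x. ennreal (indicator (oi a b) x *\<^sub>R d x) \<partial>lborel) \<le>
        (\<integral>\<^sup>+x. ennreal (norm (indicator (oi a b) x *\<^sub>R d x)) \<partial>lborel)"
      by (intro nn_integral_mono ennreal_leI) auto
    also have "\<dots> < \<infinity>" using d_int' unfolding integrable_iff_bounded by auto
    finally show ?thesis .
  qed
  have "AE x in lborel. x \<in> oi a b \<longrightarrow> (\<lambda>k. Gsum f (Nt (tk k)) (gpart (tk k)) x) \<longlonglongrightarrow> ennreal (s x)"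
  proof (rule mesh[where m = "\<lambda>k. ennreal (tk k)"])
    show "partition_n (Nt (tk k)) a b (gpart (tk k))" for k by (rule P)
    show "f (part_iv (gpart (tk k)) j) \<le> ennreal (tk k)" if "j \<in> {1..Nt (tk k)}" for k j
      using that tk by (intro gpart_small) auto
    show "(\<lambda>k. ennreal (tk k)) \<longlonglongrightarrow> 0" using tendsto_ennrealI[OF tk(2)] by simp
  qed
  then show "AE x in lborel. (\<lambda>k. Gsum f (Nt (tk k)) (gpart (tk k)) x) \<longlonglongrightarrow> ennreal (indicator (oi a b) x *\<^sub>R s x)"
    by eventually_elim (case_tac "x \<in> oi a b"; auto simp: Gsum_out[OF P])
qed

definition "S' = enn2real Sint"

lemma Sint_eq: "Sint = ennreal S'" and S'_nn: "S' \<ge> 0"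
  using Sint_fin by (auto simp: S'_def ennreal_enn2real_if)

lemma ev_at_right:
  assumes e: "e > 0"
  shows "eventually (\<lambda>t. of_nat (Nt t) * ennreal t < ennreal (S' + e)) (at_right 0)"
proof (rule sequentially_imp_eventually_within, safe)
  fix tk :: "nat \<Rightarrow> real" assume tk: "\<forall>n. tk n \<in> {0<..} \<and> tk n \<noteq> 0" "tk \<longlonglongrightarrow> 0"
  have tp: "tk k > 0" for k using tk(1) by auto
  have "S' < S' + e/2" using e by simp
  then have "Sint < ennreal (S' + e/2)" using S'_nn by (simp add: Sint_eq ennreal_less_iff)
  then have ev1: "\<forall>\<^sub>F k in sequentially. (\<integral>\<^sup>+x. Gsum f (Nt (tk k)) (gpart (tk k)) x \<partial>lborel) < ennreal (S' + e/2)"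
    using order_tendstoD(2)[OF seq_conv[OF tp tk(2)]] by blast
  have "(\<lambda>k. 2 * tk k) \<longlonglongrightarrow> 0" using tendsto_mult_right_zero[OF tk(2)] by simp
  note lim2 = this
  have ev2: "\<forall>\<^sub>F k in sequentially. 2 * tk k < e/2" using order_tendstoD(2)[OF lim2, of "e/2"] e by simp
  show "\<forall>\<^sub>F k in sequentially. of_nat (Nt (tk k)) * ennreal (tk k) < ennreal (S' + e)"
    using ev1 ev2
  proof eventually_elim
    case (elim k)
    have "of_nat (Nt (tk k)) * ennreal (tk k) \<le> 2 * ennreal (tk k) + (\<integral>\<^sup>+x. Gsum f (Nt (tk k)) (gpart (tk k)) x \<partial>lborel)"
      by (rule gpart_count[OF tp])
    also have "\<dots> < ennreal (e/2 + (S' + e/2))"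
    proof (rule add_mono_ennreal)
      show "2 * ennreal (tk k) < ennreal (e/2)"
      proof -
        have "2 * ennreal (tk k) = ennreal (2 * tk k)" using tp[of k] by (simp add: ennreal_mult)
        also have "\<dots> < ennreal (e/2)" using elim(2) tp[of k] by (subst ennreal_less_iff) auto
        finally show ?thesis .
      qed
    qed (rule elim(1))
    also have "e/2 + (S' + e/2) = S' + e" by simp
    finally show ?case .
  qed
qed

lemma max_sf_le:
  assumes "n \<ge> 1" "\<And>j. j \<in> {1..n} \<Longrightarrow> f (part_iv xs j) \<le> c"
  shows "max_sf f n xs \<le> c"
  unfolding max_sf_def using assms by (subst Max_le_iff) auto

lemma ub:
  assumes opt: "\<And>n. n \<ge> 1 \<Longrightarrow> optimal_partition a b f n (P n)" and e: "e > 0"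
  shows "\<forall>\<^sub>F n in sequentially. max_sf f n (P n) \<le> ennreal ((S' + 2*e) / real n)"
proof -
  obtain t0 where t0: "t0 > 0" and T: "\<And>t. 0 < t \<Longrightarrow> t < t0 \<Longrightarrow> of_nat (Nt t) * ennreal t < ennreal (S' + e)"
    using ev_at_right[OF e] unfolding eventually_at_right_field by auto
  have ev: "\<forall>\<^sub>F n in sequentially. real n > (S' + 2*e) / t0 \<and> n \<ge> 1"
    using eventually_gt_at_top[of "nat \<lceil>(S' + 2*e) / t0\<rceil>"]
    by eventually_elim linarith
  show ?thesis using ev
  proof eventually_elim
    case (elim n)
    define t where "t = (S' + 2*e) / real n"
    have tpos: "t > 0" using S'_nn e elim by (auto simp: t_def)
    have "S' + 2*e < t0 * real n" using elim t0 by (simp add: field_simps)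
    then have tlt: "t < t0" using elim by (simp add: t_def field_simps)
    have "ennreal (real (Nt t) * t) < ennreal (S' + e)"
      using T[OF tpos tlt] tpos by (simp add: ennreal_mult ennreal_of_nat_eq_real_of_nat)
    then have "real (Nt t) * t < S' + e" using tpos S'_nn e by (subst (asm) ennreal_less_iff) auto
    also have "S' + e < real n * t" using e elim by (simp add: t_def)
    finally have "Nt t < n" using tpos by simp
    then have Pg: "partition_n n a b (gpart t)" using tpos by (intro gpart_part) auto
    have "max_sf f n (P n) \<le> max_sf f n (gpart t)"
      using opt[of n] elim Pg unfolding optimal_partition_def by auto
    also have "\<dots> \<le> ennreal t" using elim tpos by (intro max_sf_le gpart_small) auto
    finally show ?case by (simp add: t_def)
  qed
qed

lemma M_to_0:
  assumes opt: "\<And>n. n \<ge> 1 \<Longrightarrow> optimal_partition a b f n (P n)"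
  shows "(\<lambda>n. max_sf f n (P n)) \<longlonglongrightarrow> 0"
proof (rule tendsto_sandwich[where f = "\<lambda>_. 0"])
  show "\<forall>\<^sub>F n in sequentially. 0 \<le> max_sf f n (P n)" by simp
  show "\<forall>\<^sub>F n in sequentially. max_sf f n (P n) \<le> ennreal ((S' + 2*1) / real n)"
    by (rule ub[OF opt]) auto
  have "(\<lambda>n. (S' + 2*1) / real n) \<longlonglongrightarrow> 0" by (rule lim_const_over_n)
  then show "(\<lambda>n. ennreal ((S' + 2*1) / real n)) \<longlonglongrightarrow> 0" using tendsto_ennrealI by fastforce
qed simp

lemma ub2:
  assumes opt: "\<And>n. n \<ge> 1 \<Longrightarrow> optimal_partition a b f n (P n)" and e: "e > 0"
  shows "\<forall>\<^sub>F n in sequentially. of_nat n * max_sf f n (P n) \<le> ennreal (S' + 2*e)"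
proof -
  have u: "\<forall>\<^sub>F n in sequentially. max_sf f n (P n) \<le> ennreal ((S' + 2*e) / real n)"
    by (rule ub[OF opt e])
  show ?thesis using u eventually_gt_at_top[of 0]
proof eventually_elim
  case (elim n)
  have "of_nat n * max_sf f n (P n) \<le> of_nat n * ennreal ((S' + 2*e) / real n)"
    using elim by (intro mult_left_mono) auto
  also have "\<dots> = ennreal (S' + 2*e)"
  proof -
    have "(of_nat n :: ennreal) * ennreal ((S' + 2*e) / real n) = ennreal (real n * ((S' + 2*e) / real n))"
      using S'_nn e by (subst ennreal_mult) (auto simp: ennreal_of_nat_eq_real_of_nat)
    then show ?thesis using elim by simp
  qed
  finally show ?case .
qed
qed

end


context sfd begin

lemma s_pos_AE: "AE x in lborel. x \<in> oi a b \<longrightarrow> s x > 0"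
  using RN by (simp add: RN_sf_def)

lemma s_nonneg_AE: "AE x in lborel. 0 \<le> indicator (oi a b) x *\<^sub>R s x"
  using s_pos_AE
proof eventually_elim
  case (elim x) then show ?case by (cases "x \<in> oi a b") auto
qed

lemma Sint_real: "Sint = ennreal (set_lebesgue_integral lborel (oi a b) s)"
  unfolding Sint_def set_lebesgue_integral_def using s_int s_nonneg_AE
  by (rule nn_integral_eq_integral)

lemma lower:
  assumes opt: "\<And>n. n \<ge> 1 \<Longrightarrow> optimal_partition a b f n (P n)"
    and cd: "a \<le> c" "c < d'" "d' \<le> b"
  shows "liminf (\<lambda>n. of_nat (card (meet_idx n (P n) (oi c d'))) *
             Max ((\<lambda>j. f (part_iv (P n) j)) ` meet_idx n (P n) (oi c d')))
           \<ge> ennreal (set_lebesgue_integral lborel (oi c d') s)"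
proof -
  define J where "J = oi c d'"
  have JI: "J \<subseteq> oi a b" unfolding J_def using cd by (intro oi_mono) auto
  have sI: "set_integrable lborel (oi a b) s" using RN by (simp add: RN_sf_def)
  have sJ: "set_integrable lborel J s" by (rule set_integrable_subset[OF sI _ JI]) (simp add: J_def)
  have SJ: "ennreal (set_lebesgue_integral lborel J s) = (\<integral>\<^sup>+x. ennreal (indicator J x *\<^sub>R s x) \<partial>lborel)"
    unfolding set_lebesgue_integral_def
  proof (rule nn_integral_eq_integral[symmetric])
    show "integrable lborel (\<lambda>x. indicator J x *\<^sub>R s x)" using sJ unfolding set_integrable_def .
    show "AE x in lborel. 0 \<le> indicator J x *\<^sub>R s x"
      using s_pos_AE
    proof eventually_elim
      case (elim x) then show ?case using JI by (cases "x \<in> J") auto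
    qed
  qed
  define Q where "Q k = (if k = 0 then (\<lambda>j::nat. if j = 0 then a else b) else P k)" for k
  define nQ where "nQ k = max 1 k" for k :: nat
  have PQ: "partition_n (nQ k) a b (Q k)" for k
  proof (cases "k = 0")
    case True then show ?thesis using ab by (auto simp: Q_def nQ_def partition_n_def)
  next
    case False then show ?thesis using opt[of k] by (auto simp: Q_def nQ_def optimal_partition_def)
  qed
  have evQ: "\<forall>\<^sub>F k in sequentially. nQ k = k \<and> Q k = P k"
    using eventually_gt_at_top[of 0] by eventually_elim (auto simp: Q_def nQ_def)
  define m where "m k = max_sf f (nQ k) (Q k)" for k
  have m0: "m \<longlonglongrightarrow> 0"
  proof -
    have "(\<lambda>k. max_sf f k (P k)) \<longlonglongrightarrow> 0" by (rule M_to_0[OF opt])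
    moreover have "\<forall>\<^sub>F k in sequentially. max_sf f k (P k) = m k"
      using evQ by eventually_elim (simp add: m_def)
    ultimately show ?thesis by (rule Lim_transform_eventually)
  qed
  have msmall: "f (part_iv (Q k) j) \<le> m k" if "j \<in> {1..nQ k}" for k j
    unfolding m_def max_sf_def using that by (intro Max_ge) auto
  have conv: "AE x in lborel. x \<in> oi a b \<longrightarrow> (\<lambda>k. Gsum f (nQ k) (Q k) x) \<longlonglongrightarrow> ennreal (s x)"
    by (rule mesh[OF PQ msmall m0])
  define u where "u k x = Gsum f (nQ k) (Q k) x * indicator J x" for k x
  have "ennreal (set_lebesgue_integral lborel J s) \<le> (\<integral>\<^sup>+x. liminf (\<lambda>k. u k x) \<partial>lborel)"
    unfolding SJ
  proof (rule nn_integral_mono_AE)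
    show "AE x in lborel. ennreal (indicator J x *\<^sub>R s x) \<le> liminf (\<lambda>k. u k x)"
      using conv
    proof eventually_elim
      case (elim x)
      show ?case
      proof (cases "x \<in> J")
        case True
        then have "(\<lambda>k. u k x) \<longlonglongrightarrow> ennreal (s x)" using elim JI by (auto simp: u_def)
        then have "liminf (\<lambda>k. u k x) = ennreal (s x)" by (intro lim_imp_Liminf) auto
        then show ?thesis using True by simp
      qed simp
    qed
  qed
  also have "\<dots> \<le> liminf (\<lambda>k. \<integral>\<^sup>+x. u k x \<partial>lborel)"
    by (rule nn_integral_liminf) (auto simp: u_def J_def)
  also have "\<dots> \<le> liminf (\<lambda>n. of_nat (card (meet_idx n (P n) J)) *
             Max ((\<lambda>j. f (part_iv (P n) j)) ` meet_idx n (P n) J))"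
  proof (rule Liminf_mono)
    show "\<forall>\<^sub>F n in sequentially. (\<integral>\<^sup>+x. u n x \<partial>lborel) \<le> of_nat (card (meet_idx n (P n) J)) *
             Max ((\<lambda>j. f (part_iv (P n) j)) ` meet_idx n (P n) J)"
      using evQ
    proof eventually_elim
      case (elim n)
      define K where "K = meet_idx n (P n) J"
      define T where "T j = (\<integral>\<^sup>+x. sf_ratio f (part_iv (P n) j) * indicator (part_iv (P n) j) x * indicator J x \<partial>lborel)" for j
      have KS: "K \<subseteq> {1..n}" by (auto simp: K_def meet_idx_def)
      have ux: "u n x = (\<Sum>j\<in>{1..n}. sf_ratio f (part_iv (P n) j) * indicator (part_iv (P n) j) x * indicator J x)" for x
      proof -
        have "u n x = Gsum f n (P n) x * indicator J x" using elim by (simp add: u_def)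
        also have "\<dots> = (\<Sum>j\<in>{1..n}. sf_ratio f (part_iv (P n) j) * indicator (part_iv (P n) j) x * indicator J x)"
          unfolding Gsum_def by (rule sum_distrib_right)
        finally show ?thesis .
      qed
      have "(\<integral>\<^sup>+x. u n x \<partial>lborel) = (\<Sum>j\<in>{1..n}. T j)"
        unfolding ux T_def
      proof (rule nn_integral_sum)
        fix j
        show "(\<lambda>x. sf_ratio f (part_iv (P n) j) * indicator (part_iv (P n) j) x * indicator J x) \<in> borel_measurable lborel"
          unfolding part_iv_def J_def by measurable
      qed
      also have "\<dots> = (\<Sum>j\<in>K. T j)"
      proof -
        have Z: "\<forall>j\<in>{1..n} - K. T j = 0"
        proof
          fix j assume "j \<in> {1..n} - K"
          then have "part_iv (P n) j \<inter> J = {}" by (auto simp: K_def meet_idx_def)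
          then have "\<And>x. sf_ratio f (part_iv (P n) j) * indicator (part_iv (P n) j) x * indicator J x = 0"
            by (auto simp: indicator_def)
          then have E: "(\<lambda>x. sf_ratio f (part_iv (P n) j) * indicator (part_iv (P n) j) x * indicator J x) = (\<lambda>x. 0)"
            by (rule ext)
          show "T j = 0" unfolding T_def E by simp
        qed
        show ?thesis using sum.mono_neutral_right[OF _ KS Z] by simp
      qed
      also have "\<dots> \<le> (\<Sum>j\<in>K. Max ((\<lambda>j. f (part_iv (P n) j)) ` K))"
      proof (rule sum_mono)
        fix j assume j: "j \<in> K"
        have "T j \<le> (\<integral>\<^sup>+x. sf_ratio f (part_iv (P n) j) * indicator (part_iv (P n) j) x \<partial>lborel)"
          unfolding T_def by (intro nn_integral_mono) (auto simp: indicator_def)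
        also have "\<dots> \<le> f (part_iv (P n) j)" by (rule ratio_integral) (simp add: part_iv_def)
        also have "\<dots> \<le> Max ((\<lambda>j. f (part_iv (P n) j)) ` K)"
          using j KS finite_subset[OF KS] by (intro Max_ge) auto
        finally show "T j \<le> Max ((\<lambda>j. f (part_iv (P n) j)) ` K)" .
      qed
      also have "\<dots> = of_nat (card K) * Max ((\<lambda>j. f (part_iv (P n) j)) ` K)" by simp
      finally show ?case by (simp add: K_def)
    qed
  qed
  finally show ?thesis by (simp add: J_def)
qed

end


theorem lemma3p8:
  fixes a b c d :: ereal and f :: "real set \<Rightarrow> ennreal" and s :: "real \<Rightarrow> real"
    and P :: "nat \<Rightarrow> nat \<Rightarrow> ereal"
  assumes "a < b"
    and "continuous_sf a b f" and "increasing_sf a b f"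
    and "RN_sf a b f s" and "dominated_sf a b f"
    and "a \<le> c" and "c < d" and "d \<le> b"
    and "\<And>n. n \<ge> 1 \<Longrightarrow> optimal_partition a b f n (P n)"
  shows "(liminf (\<lambda>n. of_nat (card (meet_idx n (P n) (oi c d))) *
             Max ((\<lambda>j. f (part_iv (P n) j)) ` meet_idx n (P n) (oi c d)))
           \<ge> ennreal (set_lebesgue_integral lborel (oi c d) s)) \<and>
         ((\<lambda>n. of_nat n * max_sf f n (P n))
           \<longlonglongrightarrow> ennreal (set_lebesgue_integral lborel (oi a b) s))"
proof -
  obtain dd where dd: "set_integrable lborel (oi a b) dd"
    "\<And>n xs. partition_n n a b xs \<Longrightarrow> (AE x in lborel. x \<in> oi a b \<longrightarrow>
              (\<Sum>j\<in>{1..n}. sf_ratio f (part_iv xs j) * indicator (part_iv xs j) x) \<le> ennreal (dd x))"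
    using assms(5) unfolding dominated_sf_def by blast
  interpret sfd a b f s dd
  proof unfold_locales
    show "a < b" "increasing_sf a b f" "RN_sf a b f s" "continuous_sf a b f"
      "set_integrable lborel (oi a b) dd" using assms dd(1) by auto
    show "AE x in lborel. x \<in> oi a b \<longrightarrow> Gsum f n xs x \<le> ennreal (dd x)" if "partition_n n a b xs" for n xs
      using dd(2)[OF that] by (simp add: Gsum_def)
  qed
  have opt: "\<And>n. n \<ge> 1 \<Longrightarrow> optimal_partition a b f n (P n)" by (rule assms(9))
  have part1: "liminf (\<lambda>n. of_nat (card (meet_idx n (P n) (oi c d))) *
             Max ((\<lambda>j. f (part_iv (P n) j)) ` meet_idx n (P n) (oi c d)))
           \<ge> ennreal (set_lebesgue_integral lborel (oi c d) s)"
    by (rule lower[OF opt assms(6-8)])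
  define X where "X = ennreal (set_lebesgue_integral lborel (oi a b) s)"
  have XS: "X = ennreal S'" using Sint_real Sint_eq by (simp add: X_def)
  have lo: "X \<le> liminf (\<lambda>n. of_nat n * max_sf f n (P n))"
  proof -
    have "X \<le> liminf (\<lambda>n. of_nat (card (meet_idx n (P n) (oi a b))) *
             Max ((\<lambda>j. f (part_iv (P n) j)) ` meet_idx n (P n) (oi a b)))"
      unfolding X_def using assms(1) by (intro lower[OF opt]) auto
    also have "\<dots> \<le> liminf (\<lambda>n. of_nat n * max_sf f n (P n))"
    proof (rule Liminf_mono)
      show "\<forall>\<^sub>F n in sequentially. of_nat (card (meet_idx n (P n) (oi a b))) *
             Max ((\<lambda>j. f (part_iv (P n) j)) ` meet_idx n (P n) (oi a b)) \<le> of_nat n * max_sf f n (P n)"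
      proof (rule always_eventually, rule allI)
        fix n
        define K where "K = meet_idx n (P n) (oi a b)"
        have KS: "K \<subseteq> {1..n}" by (auto simp: K_def meet_idx_def)
        have main: "of_nat (card K) * Max ((\<lambda>j. f (part_iv (P n) j)) ` K) \<le> of_nat n * max_sf f n (P n)"
        proof (cases "K = {}")
          case False
          have "card K \<le> n" using card_mono[OF _ KS] by simp
          then have c: "(of_nat (card K) :: ennreal) \<le> of_nat n" by simp
          have "Max ((\<lambda>j. f (part_iv (P n) j)) ` K) \<le> max_sf f n (P n)"
            unfolding max_sf_def using False KS by (intro Max_mono) auto
          then show ?thesis using c by (intro mult_mono) auto
        qed simp
        then show "of_nat (card (meet_idx n (P n) (oi a b))) *
             Max ((\<lambda>j. f (part_iv (P n) j)) ` meet_idx n (P n) (oi a b)) \<le> of_nat n * max_sf f n (P n)"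
          by (simp add: K_def)
      qed
    qed
    finally show ?thesis .
  qed
  have up: "limsup (\<lambda>n. of_nat n * max_sf f n (P n)) \<le> X"
    unfolding XS
  proof (rule ennreal_le_epsilon)
    fix e :: real assume e: "0 < e"
    have "limsup (\<lambda>n. of_nat n * max_sf f n (P n)) \<le> ennreal (S' + 2 * (e/2))"
      using e by (intro Limsup_bounded ub2[OF opt]) auto
    also have "\<dots> = ennreal S' + ennreal e" using e S'_nn by (simp add: ennreal_plus)
    finally show "limsup (\<lambda>n. of_nat n * max_sf f n (P n)) \<le> ennreal S' + ennreal e" .
  qed
  have "liminf (\<lambda>n. of_nat n * max_sf f n (P n)) \<le> limsup (\<lambda>n. of_nat n * max_sf f n (P n))"
    by (rule Liminf_le_Limsup) simp
  then have "liminf (\<lambda>n. of_nat n * max_sf f n (P n)) = X" "limsup (\<lambda>n. of_nat n * max_sf f n (P n)) = X"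
    using lo up by auto
  then have "(\<lambda>n. of_nat n * max_sf f n (P n)) \<longlonglongrightarrow> X" by (intro Liminf_eq_Limsup) auto
  then show ?thesis using part1 by (simp add: X_def)
qed


end
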